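(* Let $\gamma>0$ and, for $n\in\mathbb{N}$, let $D_n=\operatorname{diag}(1,2,\dots,n)\in\mathbb{R}^{n\times n}$ and \[ \mathcal{W}_n=\begin{pmatrix} 0 & D_n & 0\\ -D_n & 0 & \gamma D_n\\ 0 & -\gamma D_n & -D_n^2\end{pmatrix}\in\mathbb{R}^{3n\times 3n}, \] acting on $\mathcal{H}_n=\mathbb{C}^{3n}$ with the Euclidean norm, and let $T_n(t)=e^{t\mathcal{W}_n}$. Then the semigroups $T_n(\cdot)$ are uniformly polynomially stable of order $\alpha=2$: there exists a constant $M>0$, independent of $n$, such that \[ \big\|T_n(t)\mathcal{W}_n^{-1}\big\|_{\mathcal{L}(\mathcal{H}_n)}\le \frac{M}{t^{1/2}}\qquad\text{for all } t>0 \text{ and all } n\in\mathbb{N}. \]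
   Context: $\mathcal{W}_n$ is the matrix obtained in the paper from a modal approximation of the weakly coupled thermoelastic system under Dirichlet (displacement)–Neumann (temperature) boundary conditions. Each $\mathcal{W}_n$ is invertible and generates a contraction semigroup, since $\operatorname{Re}(\mathcal{W}_n y,y)=-\|D_n\theta\|^2\le 0$ for $y=(u,v,\theta)$. *)

theory Defs
  imports "Jordan_Normal_Form.Gauss_Jordan_Elimination"
begin

text \<open>The matrix W_n (size 3n x 3n), written entrywise in 3x3 block form with
  n x n blocks; the diagonal block entries of D_n are 1,...,n (index k gives k+1).\<close>
definition W_mat :: "real \<Rightarrow> nat \<Rightarrow> complex mat" where
  "W_mat \<gamma> n = mat (3*n) (3*n) (\<lambda>(i,j).
     (let bi = i div n; bj = j div n; d = complex_of_real (real (i mod n + 1)) in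
      if i mod n \<noteq> j mod n then 0
      else if bi = 0 \<and> bj = 1 then d
      else if bi = 1 \<and> bj = 0 then - d
      else if bi = 1 \<and> bj = 2 then complex_of_real \<gamma> * d
      else if bi = 2 \<and> bj = 1 then - complex_of_real \<gamma> * d
      else if bi = 2 \<and> bj = 2 then - (d * d)
      else 0))"

definition mat_exp :: "complex mat \<Rightarrow> complex mat" where
  "mat_exp A = mat (dim_row A) (dim_col A)
     (\<lambda>(i,j). \<Sum>k. (A ^\<^sub>m k) $$ (i,j) / of_nat (fact k))"

definition T_sg :: "real \<Rightarrow> nat \<Rightarrow> real \<Rightarrow> complex mat" where
  "T_sg \<gamma> n t = mat_exp (complex_of_real t \<cdot>\<^sub>m W_mat \<gamma> n)"

definition vec_norm :: "complex vec \<Rightarrow> real" where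
  "vec_norm v = sqrt (\<Sum>i<dim_vec v. (cmod (v $ i))^2)"

definition op_norm :: "complex mat \<Rightarrow> real" where
  "op_norm A = Sup {vec_norm (A *\<^sub>v v) | v. v \<in> carrier_vec (dim_col A) \<and> vec_norm v \<le> 1}"

end

theory Submission
  imports Defs "Jordan_Normal_Form.Determinant"
begin


lemma pow_mat_Suc_left:
  assumes A: "A \<in> carrier_mat N N"
  shows "A ^\<^sub>m (Suc m) = A * A ^\<^sub>m m"
proof (induction m)
  case 0 then show ?case using A by simp
next
  case (Suc m)
  have "A ^\<^sub>m Suc (Suc m) = (A * A ^\<^sub>m m) * A" using Suc by simp
  also have "\<dots> = A * (A ^\<^sub>m m * A)" using A by (rule assoc_mult_mat) (use A in auto)
  finally show ?case by simp
qed

lemma pow_mat_smult: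
  fixes A :: "complex mat"
  assumes A: "A \<in> carrier_mat N N"
  shows "(c \<cdot>\<^sub>m A) ^\<^sub>m m = (c ^ m) \<cdot>\<^sub>m (A ^\<^sub>m m)"
proof (induction m)
  case 0 then show ?case using A by (auto intro!: eq_matI)
next
  case (Suc m)
  have "(c \<cdot>\<^sub>m A) ^\<^sub>m Suc m = ((c ^ m) \<cdot>\<^sub>m (A ^\<^sub>m m)) * (c \<cdot>\<^sub>m A)" using Suc by simp
  also have "\<dots> = (c ^ Suc m) \<cdot>\<^sub>m (A ^\<^sub>m Suc m)"
    using A by (auto intro!: eq_matI sum.cong simp: scalar_prod_def sum_distrib_left)
  finally show ?case .
qed

definition Rb :: "complex mat \<Rightarrow> nat \<Rightarrow> real" where
  "Rb A N = (\<Sum>i<N. \<Sum>j<N. cmod (A $$ (i,j))) + 1"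

lemma Rb_col: "j < N \<Longrightarrow> (\<Sum>l<N. cmod (A $$ (l,j))) \<le> Rb A N"
proof -
  assume j: "j < N"
  have "(\<Sum>l<N. cmod (A $$ (l,j))) \<le> (\<Sum>l<N. \<Sum>j'<N. cmod (A $$ (l,j')))"
    by (rule sum_mono, rule member_le_sum) (use j in auto)
  then show ?thesis unfolding Rb_def by simp
qed

lemma Rb_ge1: "Rb A N \<ge> 1"
  unfolding Rb_def by (simp add: sum_nonneg)

lemma pow_entry_bound:
  assumes A: "A \<in> carrier_mat N N"
  shows "i < N \<Longrightarrow> j < N \<Longrightarrow> cmod ((A ^\<^sub>m m) $$ (i,j)) \<le> Rb A N ^ m"
proof (induction m arbitrary: i j)
  case 0 then show ?case using A by simp
next
  case (Suc m)
  have "cmod ((A ^\<^sub>m Suc m) $$ (i,j)) = cmod (\<Sum>l<N. (A ^\<^sub>m m) $$ (i,l) * A $$ (l,j))"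
    using A Suc.prems by (simp add: scalar_prod_def lessThan_atLeast0)
  also have "\<dots> \<le> (\<Sum>l<N. cmod ((A ^\<^sub>m m) $$ (i,l)) * cmod (A $$ (l,j)))"
    by (rule order_trans[OF norm_sum]) (simp add: norm_mult)
  also have "\<dots> \<le> (\<Sum>l<N. Rb A N ^ m * cmod (A $$ (l,j)))"
    by (rule sum_mono, rule mult_right_mono) (use Suc in auto)
  also have "\<dots> = Rb A N ^ m * (\<Sum>l<N. cmod (A $$ (l,j)))" by (simp add: sum_distrib_left)
  also have "\<dots> \<le> Rb A N ^ m * Rb A N"
    by (rule mult_left_mono[OF Rb_col]) (use Suc.prems Rb_ge1[of A N] in auto)
  finally show ?case by (simp add: mult_ac)
qed

definition gco :: "complex mat \<Rightarrow> nat \<Rightarrow> nat \<Rightarrow> nat \<Rightarrow> complex" where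
  "gco A i j m = (A ^\<^sub>m m) $$ (i,j) / of_nat (fact m)"

definition gser :: "complex mat \<Rightarrow> nat \<Rightarrow> nat \<Rightarrow> complex \<Rightarrow> complex" where
  "gser A i j z = (\<Sum>m. gco A i j m * z ^ m)"

lemma gser_summable:
  assumes A: "A \<in> carrier_mat N N" and ij: "i < N" "j < N"
  shows "summable (\<lambda>m. gco A i j m * z ^ m)"
proof (rule summable_norm_cancel, rule summable_comparison_test')
  show "summable (\<lambda>m. (Rb A N * cmod z) ^ m /\<^sub>R fact m)" by (rule summable_exp_generic)
  fix m :: nat
  have "norm (norm (gco A i j m * z ^ m)) = cmod ((A ^\<^sub>m m) $$ (i,j)) * cmod z ^ m / fact m"
    by (simp add: gco_def norm_mult norm_divide norm_power)
  also have "\<dots> \<le> Rb A N ^ m * cmod z ^ m / fact m"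
    by (intro divide_right_mono mult_right_mono pow_entry_bound[OF A ij]) auto
  also have "\<dots> = (Rb A N * cmod z) ^ m /\<^sub>R fact m" by (simp add: power_mult_distrib divide_inverse)
  finally show "norm (norm (gco A i j m * z ^ m)) \<le> (Rb A N * cmod z) ^ m /\<^sub>R fact m" .
qed

lemma diffs_gco:
  assumes A: "A \<in> carrier_mat N N" and ij: "i < N" "j < N"
  shows "diffs (gco A i j) m = (\<Sum>l<N. A $$ (i,l) * gco A l j m)"
proof -
  have "(A ^\<^sub>m Suc m) $$ (i,j) = (\<Sum>l<N. A $$ (i,l) * (A ^\<^sub>m m) $$ (l,j))"
    using A ij by (simp add: pow_mat_Suc_left[OF A] scalar_prod_def lessThan_atLeast0 del: pow_mat.simps)
  moreover have fr: "(of_nat (Suc m) :: complex) / of_nat (fact (Suc m)) = 1 / of_nat (fact m)"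
  proof -
    have "(of_nat (fact (Suc m))::complex) = of_nat (Suc m) * of_nat (fact m)"
      by (metis of_nat_fact fact_Suc)
    then show ?thesis by (simp only: nonzero_divide_mult_cancel_left of_nat_eq_0_iff Suc_neq_Zero not_False_eq_True)
  qed
  ultimately have "diffs (gco A i j) m = (\<Sum>l<N. A $$ (i,l) * (A ^\<^sub>m m) $$ (l,j)) * (1 / of_nat (fact m))"
    unfolding diffs_def gco_def by (metis fr times_divide_eq_right mult.commute)
  also have "\<dots> = (\<Sum>l<N. A $$ (i,l) * gco A l j m)"
    unfolding gco_def sum_distrib_right by (rule sum.cong) auto
  finally show ?thesis .
qed

lemma gser_deriv:
  assumes A: "A \<in> carrier_mat N N" and ij: "i < N" "j < N"
  shows "(gser A i j has_field_derivative (\<Sum>l<N. A $$ (i,l) * gser A l j z)) (at z)"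
proof -
  have "((\<lambda>x. \<Sum>m. gco A i j m * x ^ m) has_field_derivative (\<Sum>m. diffs (gco A i j) m * z ^ m)) (at z)"
    by (rule termdiffs_strong_converges_everywhere) (rule gser_summable[OF A ij])
  moreover have "(\<Sum>m. diffs (gco A i j) m * z ^ m) = (\<Sum>l<N. A $$ (i,l) * gser A l j z)"
  proof -
    have "(\<Sum>m. diffs (gco A i j) m * z ^ m) = (\<Sum>m. \<Sum>l<N. A $$ (i,l) * (gco A l j m * z ^ m))"
      by (simp add: diffs_gco[OF A ij] sum_distrib_left sum_distrib_right mult_ac)
    also have "\<dots> = (\<Sum>l<N. \<Sum>m. A $$ (i,l) * (gco A l j m * z ^ m))"
      by (rule suminf_sum) (auto intro!: summable_mult gser_summable[OF A _ ij(2)])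
    also have "\<dots> = (\<Sum>l<N. A $$ (i,l) * gser A l j z)"
      unfolding gser_def
      by (rule sum.cong[OF refl], rule suminf_mult, rule gser_summable[OF A _ ij(2)]) auto
    finally show ?thesis .
  qed
  moreover have "gser A i j = (\<lambda>x. \<Sum>m. gco A i j m * x ^ m)" by (simp add: fun_eq_iff gser_def)
  ultimately show ?thesis by metis
qed

lemma gser_zero:
  assumes A: "A \<in> carrier_mat N N" and ij: "i < N" "j < N"
  shows "gser A i j 0 = (if i = j then 1 else 0)"
  using A ij unfolding gser_def powser_zero by (simp add: gco_def)

lemma mat_exp_entry:
  assumes A: "A \<in> carrier_mat N N" and ij: "i < N" "j < N"
  shows "mat_exp (complex_of_real t \<cdot>\<^sub>m A) $$ (i,j) = gser A i j (complex_of_real t)"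
  using A ij by (simp add: mat_exp_def gser_def gco_def pow_mat_smult[OF A] mult_ac)

lemma mat_exp_carrier:
  assumes A: "A \<in> carrier_mat N N"
  shows "mat_exp (c \<cdot>\<^sub>m A) \<in> carrier_mat N N"
  using A by (simp add: mat_exp_def)


lemma sum_lessThan_add: "(\<Sum>l<m+(n::nat). f l) = (\<Sum>l<m. f l) + (\<Sum>l<n. f (m+l))"
  by (induction n) (auto simp: add.assoc)

lemma sum_split3: "(\<Sum>l<3*(n::nat). f l) = (\<Sum>s<n. f s) + (\<Sum>s<n. f (n+s)) + (\<Sum>s<n. f (2*n+s))"
proof -
  have e: "3*n = (n+n)+n" by simp
  have "(\<Sum>l<3*n. f l) = (\<Sum>l<(n+n)+n. f l)" by (simp only: e)
  also have "\<dots> = (\<Sum>s<n. f s) + (\<Sum>s<n. f (n+s)) + (\<Sum>s<n. f (2*n+s))"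
    unfolding sum_lessThan_add by (simp add: mult_2)
  finally show ?thesis .
qed

lemma W_carrier: "W_mat \<gamma> n \<in> carrier_mat (3*n) (3*n)"
  by (simp add: W_mat_def)

lemma W_entry:
  assumes "b < 3" "b' < 3" "r < n" "s < n"
  shows "W_mat \<gamma> n $$ (b*n+r, b'*n+s) =
    (let d = complex_of_real (real (r + 1)) in
      if r \<noteq> s then 0
      else if b = 0 \<and> b' = 1 then d
      else if b = 1 \<and> b' = 0 then - d
      else if b = 1 \<and> b' = 2 then complex_of_real \<gamma> * d
      else if b = 2 \<and> b' = 1 then - complex_of_real \<gamma> * d
      else if b = 2 \<and> b' = 2 then - (d * d)
      else 0)"
proof -
  have "b*n \<le> 2*n" "b'*n \<le> 2*n" using assms by (intro mult_le_mono1; simp)+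
  then have i: "b*n+r < 3*n" "b'*n+s < 3*n" using assms by linarith+
  have d: "(b*n+r) div n = b" "(b*n+r) mod n = r" "(b'*n+s) div n = b'" "(b'*n+s) mod n = s"
    using assms by auto
  show ?thesis unfolding W_mat_def using i by (simp only: index_mat split d) simp
qed

lemma sum_zero_lt: "(\<And>s. s < n \<Longrightarrow> f s = 0) \<Longrightarrow> (\<Sum>s<(n::nat). f s) = 0"
  by simp

lemma sum_delta_lt: "(\<And>s. s < n \<Longrightarrow> f s = (if s = r then c else 0)) \<Longrightarrow> r < n \<Longrightarrow> (\<Sum>s<(n::nat). f s) = c"
  by simp

lemma W_rows:
  assumes r: "r < n"
  defines "k \<equiv> complex_of_real (real (r + 1))"
  shows "(\<Sum>l<3*n. W_mat \<gamma> n $$ (r,l) * z l) = k * z (n+r)"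
    "(\<Sum>l<3*n. W_mat \<gamma> n $$ (n+r,l) * z l) = - k * z r + complex_of_real \<gamma> * k * z (2*n+r)"
    "(\<Sum>l<3*n. W_mat \<gamma> n $$ (2*n+r,l) * z l) = - complex_of_real \<gamma> * k * z (n+r) - k * k * z (2*n+r)"
proof -
  have e: "\<And>b b' s. b < 3 \<Longrightarrow> b' < 3 \<Longrightarrow> s < n \<Longrightarrow> W_mat \<gamma> n $$ (b*n+r, b'*n+s) = 
    (let d = k in
      if r \<noteq> s then 0
      else if b = 0 \<and> b' = 1 then d
      else if b = 1 \<and> b' = 0 then - d
      else if b = 1 \<and> b' = 2 then complex_of_real \<gamma> * d
      else if b = 2 \<and> b' = 1 then - complex_of_real \<gamma> * d
      else if b = 2 \<and> b' = 2 then - (d * d)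
      else 0)" unfolding k_def by (rule W_entry) (use r in auto)
  have e00: "\<And>s. s < n \<Longrightarrow> W_mat \<gamma> n $$ (r, s) = 0" using e[of 0 0] by simp
  have e01: "\<And>s. s < n \<Longrightarrow> W_mat \<gamma> n $$ (r, n+s) = (if s = r then k else 0)" using e[of 0 1] by auto
  have e02: "\<And>s. s < n \<Longrightarrow> W_mat \<gamma> n $$ (r, 2*n+s) = 0" using e[of 0 2] by simp
  have e10: "\<And>s. s < n \<Longrightarrow> W_mat \<gamma> n $$ (n+r, s) = (if s = r then -k else 0)" using e[of 1 0] by auto
  have e11: "\<And>s. s < n \<Longrightarrow> W_mat \<gamma> n $$ (n+r, n+s) = 0" using e[of 1 1] by simp
  have e12: "\<And>s. s < n \<Longrightarrow> W_mat \<gamma> n $$ (n+r, 2*n+s) = (if s = r then complex_of_real \<gamma> * k else 0)" using e[of 1 2] by auto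
  have e20: "\<And>s. s < n \<Longrightarrow> W_mat \<gamma> n $$ (2*n+r, s) = 0" using e[of 2 0] by simp
  have e21: "\<And>s. s < n \<Longrightarrow> W_mat \<gamma> n $$ (2*n+r, n+s) = (if s = r then - complex_of_real \<gamma> * k else 0)" using e[of 2 1] by auto
  have e22: "\<And>s. s < n \<Longrightarrow> W_mat \<gamma> n $$ (2*n+r, 2*n+s) = (if s = r then - (k*k) else 0)" using e[of 2 2] by auto
  show "(\<Sum>l<3*n. W_mat \<gamma> n $$ (r,l) * z l) = k * z (n+r)"
    unfolding sum_split3
    by (subst sum_zero_lt[of n], simp add: e00, subst sum_delta_lt[OF _ r, where c="k * z (n+r)"], simp add: e01,
        subst sum_zero_lt[of n], simp add: e02, simp)
  show "(\<Sum>l<3*n. W_mat \<gamma> n $$ (n+r,l) * z l) = - k * z r + complex_of_real \<gamma> * k * z (2*n+r)"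
    unfolding sum_split3
    by (subst sum_delta_lt[OF _ r, where c="- k * z r"], simp add: e10, subst sum_zero_lt[of n], simp add: e11,
        subst sum_delta_lt[OF _ r, where c="complex_of_real \<gamma> * k * z (2*n+r)"], simp add: e12, simp)
  show "(\<Sum>l<3*n. W_mat \<gamma> n $$ (2*n+r,l) * z l) = - complex_of_real \<gamma> * k * z (n+r) - k * k * z (2*n+r)"
    unfolding sum_split3
    by (subst sum_zero_lt[of n], simp add: e20, subst sum_delta_lt[OF _ r, where c="- complex_of_real \<gamma> * k * z (n+r)"], simp add: e21,
        subst sum_delta_lt[OF _ r, where c="- k * k * z (2*n+r)"], simp add: e22, simp)
qed

definition yv :: "complex mat \<Rightarrow> nat \<Rightarrow> complex vec \<Rightarrow> nat \<Rightarrow> real \<Rightarrow> complex" where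
  "yv A N w i t = (\<Sum>j<N. gser A i j (complex_of_real t) * w $ j)"

lemma yv_exp:
  assumes A: "A \<in> carrier_mat N N" and w: "w \<in> carrier_vec N" and i: "i < N"
  shows "(mat_exp (complex_of_real t \<cdot>\<^sub>m A) *\<^sub>v w) $ i = yv A N w i t"
proof -
  have C: "mat_exp (complex_of_real t \<cdot>\<^sub>m A) \<in> carrier_mat N N" by (rule mat_exp_carrier[OF A])
  have "(mat_exp (complex_of_real t \<cdot>\<^sub>m A) *\<^sub>v w) $ i =
     (\<Sum>j\<in>{0..<N}. mat_exp (complex_of_real t \<cdot>\<^sub>m A) $$ (i,j) * w $ j)"
    using C w i by (simp add: scalar_prod_def)
  also have "\<dots> = yv A N w i t"
    unfolding yv_def lessThan_atLeast0 by (rule sum.cong) (use A i mat_exp_entry in auto)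
  finally show ?thesis .
qed

lemma yv_deriv:
  assumes A: "A \<in> carrier_mat N N" and i: "i < N"
  shows "((\<lambda>t. yv A N w i t) has_vector_derivative (\<Sum>l<N. A $$ (i,l) * yv A N w l t)) (at t)"
proof -
  have "((\<lambda>t. yv A N w i t) has_vector_derivative
      (\<Sum>j<N. (\<Sum>l<N. A $$ (i,l) * gser A l j (complex_of_real t)) * w $ j)) (at t)"
    unfolding yv_def
    by (intro has_vector_derivative_sum has_vector_derivative_mult_left has_vector_derivative_real_field
        gser_deriv[OF A i]) auto
  moreover have "(\<Sum>j<N. (\<Sum>l<N. A $$ (i,l) * gser A l j (complex_of_real t)) * w $ j) =
      (\<Sum>l<N. A $$ (i,l) * yv A N w l t)"
    unfolding yv_def sum_distrib_right sum_distrib_left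
    by (subst sum.swap) (simp add: mult_ac)
  ultimately show ?thesis by simp
qed

lemma yv_zero:
  assumes A: "A \<in> carrier_mat N N" and i: "i < N"
  shows "yv A N w i 0 = w $ i"
proof -
  have "yv A N w i 0 = (\<Sum>j<N. (if i = j then w $ j else 0))"
    unfolding yv_def by (rule sum.cong) (use A i gser_zero[OF A] in auto)
  also have "\<dots> = w $ i" using i by simp
  finally show ?thesis .
qed


lemma young_g:
  fixes g c p q :: real
  assumes g: "g > 0"
  shows "c * p * q \<le> g/4 * p^2 + c^2/g * q^2"
proof -
  have "0 \<le> (g/2*p - c*q)^2 / g" using g by simp
  also have "(g/2*p - c*q)^2 / g = g/4 * p^2 + c^2/g * q^2 - c * p * q"
    using g by (simp add: field_simps power2_eq_square)
  finally show ?thesis by simp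
qed

lemma lyap_ineq:
  fixes g b k u v th du dv dth :: real
  assumes g: "g > 0" and k: "k \<ge> 1" and b: "b > 0"
    and bQ: "b * (g + (g^2/2-1)^2/g + 1/g) \<le> 1"
    and du: "du = k*v" and dv: "dv = -k*u + g*k*th" and dth: "dth = -g*k*v - k*k*th"
  shows "2*u*du + 2*v*dv + 2*th*dth + ((b*g/2)/k)*(du*v + u*dv) + (b/k)*(dv*th + v*dth)
          \<le> -(b*g/4)*(u^2+v^2) - th^2"
proof -
  have k0: "k \<noteq> 0" using k by simp
  have e1: "2*u*du + 2*v*dv + 2*th*dth = -2*k^2*th^2"
    by (simp add: du dv dth algebra_simps power2_eq_square)
  have e2: "((b*g/2)/k)*(du*v + u*dv) = (b*g/2)*(v^2 - u^2 + g*u*th)"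
  proof -
    have "du*v + u*dv = k*(v^2 - u^2 + g*u*th)" by (simp add: du dv algebra_simps power2_eq_square)
    then show ?thesis using k0 by simp
  qed
  have e3: "(b/k)*(dv*th + v*dth) = b*(-u*th + g*th^2 - g*v^2 - k*v*th)"
  proof -
    have "dv*th + v*dth = k*(-u*th + g*th^2 - g*v^2 - k*v*th)" by (simp add: dv dth algebra_simps power2_eq_square)
    then show ?thesis using k0 by simp
  qed
  have y1: "(g^2/2-1) * u * th \<le> g/4 * u^2 + (g^2/2-1)^2/g * th^2" by (rule young_g[OF g])
  have y2: "(-k) * v * th \<le> g/4 * v^2 + (-k)^2/g * th^2" by (rule young_g[OF g])
  have y1b: "b*((g^2/2-1) * u * th) \<le> b*(g/4 * u^2 + (g^2/2-1)^2/g * th^2)"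
    using y1 b by (intro mult_left_mono) auto
  have y2b: "b*((-k) * v * th) \<le> b*(g/4 * v^2 + k^2/g * th^2)"
    using y2 b by (intro mult_left_mono) auto
  have kk: "1 \<le> k^2" using k by (simp add: one_le_power)
  have cf: "b*g + b*(g^2/2-1)^2/g + b*k^2/g \<le> k^2"
  proof -
    have "b*g + b*(g^2/2-1)^2/g \<le> (b*g + b*(g^2/2-1)^2/g) * k^2"
    proof -
      have nn: "0 \<le> b*g + b*(g^2/2-1)^2/g" using b g by simp
      show ?thesis using mult_left_mono[OF kk nn] by simp
    qed
    also have "(b*g + b*(g^2/2-1)^2/g) * k^2 + b*k^2/g = b * (g + (g^2/2-1)^2/g + 1/g) * k^2"
      by (simp add: algebra_simps)
    also have "\<dots> \<le> 1 * k^2" using bQ by (intro mult_right_mono) auto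
    finally show ?thesis by simp
  qed
  have cft: "(b*g + b*(g^2/2-1)^2/g + b*k^2/g) * th^2 \<le> k^2 * th^2"
    by (rule mult_right_mono[OF cf]) simp
  have kt: "th^2 \<le> k^2 * th^2" using kk by (simp add: mult_le_cancel_right1)
  have "2*u*du + 2*v*dv + 2*th*dth + ((b*g/2)/k)*(du*v + u*dv) + (b/k)*(dv*th + v*dth)
     = -2*k^2*th^2 - (b*g/2)*u^2 - (b*g/2)*v^2 + b*((g^2/2-1) * u * th) + b*g*th^2 + b*((-k) * v * th)"
    unfolding e1 e2 e3 by (simp add: algebra_simps power2_eq_square)
  also have "\<dots> \<le> -2*k^2*th^2 - (b*g/2)*u^2 - (b*g/2)*v^2 + b*(g/4 * u^2 + (g^2/2-1)^2/g * th^2)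
      + b*g*th^2 + b*(g/4 * v^2 + k^2/g * th^2)"
    using y1b y2b by linarith
  also have "\<dots> = -2*k^2*th^2 - (b*g/4)*(u^2+v^2) + (b*g + b*(g^2/2-1)^2/g + b*k^2/g) * th^2"
    by (simp add: algebra_simps)
  also have "\<dots> \<le> -2*k^2*th^2 - (b*g/4)*(u^2+v^2) + k^2 * th^2"
    using cft by linarith
  also have "\<dots> \<le> -(b*g/4)*(u^2+v^2) - th^2" using kt by simp
  finally show ?thesis .
qed


definition blk :: "nat \<Rightarrow> (nat \<Rightarrow> nat \<Rightarrow> nat \<Rightarrow> complex) \<Rightarrow> complex mat" where
  "blk n F = mat (3*n) (3*n) (\<lambda>(i,j). if i mod n = j mod n then F (i div n) (j div n) (i mod n) else 0)"

lemma idx_lt: "b < 3 \<Longrightarrow> r < n \<Longrightarrow> b*n + r < 3*(n::nat)"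
proof -
  assume "b < 3" "r < n"
  then have "b*n \<le> 2*n" by (intro mult_le_mono1) simp
  then show ?thesis using \<open>r < n\<close> by linarith
qed

lemma idx_decomp: "i < 3*(n::nat) \<Longrightarrow> \<exists>b r. b < 3 \<and> r < n \<and> i = b*n + r"
proof -
  assume i: "i < 3*n"
  then have n: "n > 0" by (cases n) auto
  have "i div n < 3" using i by (simp add: div_less_iff_less_mult mult.commute)
  moreover have "i mod n < n" using n by simp
  moreover have "i = (i div n)*n + i mod n" by simp
  ultimately show ?thesis by blast
qed

lemma blk_entry: "b < 3 \<Longrightarrow> b' < 3 \<Longrightarrow> r < n \<Longrightarrow> s < n \<Longrightarrow>
  blk n F $$ (b*n+r, b'*n+s) = (if r = s then F b b' r else 0)"
  unfolding blk_def using idx_lt[of b r n] idx_lt[of b' s n] by simp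

lemma blk_carrier: "blk n F \<in> carrier_mat (3*n) (3*n)" by (simp add: blk_def)

lemma blk_row:
  assumes b: "b < 3" and r: "r < n"
  shows "(\<Sum>l<3*n. blk n F $$ (b*n+r, l) * z l) =
     F b 0 r * z r + F b 1 r * z (n+r) + F b 2 r * z (2*n+r)"
proof -
  have e: "\<And>b' s. b' < 3 \<Longrightarrow> s < n \<Longrightarrow> blk n F $$ (b*n+r, b'*n+s) = (if s = r then F b b' r else 0)"
    using blk_entry[OF b _ r] by auto
  have e0: "\<And>s. s < n \<Longrightarrow> blk n F $$ (b*n+r, s) = (if s = r then F b 0 r else 0)" using e[of 0] by simp
  have e1: "\<And>s. s < n \<Longrightarrow> blk n F $$ (b*n+r, n+s) = (if s = r then F b 1 r else 0)" using e[of 1] by simp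
  have e2: "\<And>s. s < n \<Longrightarrow> blk n F $$ (b*n+r, 2*n+s) = (if s = r then F b 2 r else 0)" using e[of 2] by simp
  show ?thesis
    unfolding sum_split3
    by (subst sum_delta_lt[OF _ r, where c="F b 0 r * z r"], simp add: e0,
        subst sum_delta_lt[OF _ r, where c="F b 1 r * z (n+r)"], simp add: e1,
        subst sum_delta_lt[OF _ r, where c="F b 2 r * z (2*n+r)"], simp add: e2, simp)
qed

definition FB :: "real \<Rightarrow> nat \<Rightarrow> nat \<Rightarrow> nat \<Rightarrow> complex" where
  "FB \<gamma> b b' r = complex_of_real (let d = real (r+1) in
     if b = 0 \<and> b' = 0 then - (\<gamma>*\<gamma>)/(d*d)
     else if b = 0 \<and> b' = 1 then - 1/d
     else if b = 0 \<and> b' = 2 then - \<gamma>/(d*d)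
     else if b = 1 \<and> b' = 0 then 1/d
     else if b = 2 \<and> b' = 0 then - \<gamma>/(d*d)
     else if b = 2 \<and> b' = 2 then - 1/(d*d)
     else 0)"

definition Binv :: "real \<Rightarrow> nat \<Rightarrow> complex mat" where
  "Binv \<gamma> n = blk n (FB \<gamma>)"

lemma W_Binv: "W_mat \<gamma> n * Binv \<gamma> n = 1\<^sub>m (3*n)"
proof (rule eq_matI)
  fix i j assume i: "i < dim_row (1\<^sub>m (3*n))" and j: "j < dim_col (1\<^sub>m (3*n))"
  then have i': "i < 3*n" and j': "j < 3*n" by auto
  obtain b r where br: "b < 3" "r < n" "i = b*n+r" using idx_decomp[OF i'] by blast
  obtain b' s where bs: "b' < 3" "s < n" "j = b'*n+s" using idx_decomp[OF j'] by blast
  have "(W_mat \<gamma> n * Binv \<gamma> n) $$ (i,j) = (\<Sum>l<3*n. W_mat \<gamma> n $$ (i,l) * Binv \<gamma> n $$ (l,j))"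
    using i' j' W_carrier[of \<gamma> n] blk_carrier[of n "FB \<gamma>"]
    by (simp add: Binv_def scalar_prod_def lessThan_atLeast0)
  also have "\<dots> = 1\<^sub>m (3*n) $$ (i,j)"
  proof -
    have B: "\<And>c. c < 3 \<Longrightarrow> Binv \<gamma> n $$ (c*n+r, j) = (if r = s then FB \<gamma> c b' r else 0)"
      unfolding Binv_def bs(3) by (rule blk_entry) (use bs br in auto)
    have B0: "Binv \<gamma> n $$ (r, j) = (if r = s then FB \<gamma> 0 b' r else 0)" using B[of 0] by simp
    have B1: "Binv \<gamma> n $$ (n+r, j) = (if r = s then FB \<gamma> 1 b' r else 0)" using B[of 1] by simp
    have B2: "Binv \<gamma> n $$ (2*n+r, j) = (if r = s then FB \<gamma> 2 b' r else 0)" using B[of 2] by simp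
    have one: "1\<^sub>m (3*n) $$ (i,j) = (if r = s \<and> b = b' then 1 else 0)"
    proof -
      have "(i = j) = (r = s \<and> b = b')"
      proof
        assume "i = j"
        then have "i mod n = j mod n" "i div n = j div n" by auto
        then show "r = s \<and> b = b'" using br bs by simp
      qed (use br bs in auto)
      then show ?thesis using i' j' by simp
    qed
    define k where "k = complex_of_real (real (r + 1))"
    have kz: "k \<noteq> 0" unfolding k_def by (simp only: of_real_eq_0_iff of_nat_eq_0_iff)
    have F: "FB \<gamma> 0 0 r = - (complex_of_real \<gamma> * complex_of_real \<gamma>) / (k*k)"
      "FB \<gamma> 0 1 r = - 1 / k" "FB \<gamma> 0 2 r = - complex_of_real \<gamma> / (k*k)"
      "FB \<gamma> 1 0 r = 1 / k" "FB \<gamma> 1 1 r = 0" "FB \<gamma> 1 2 r = 0"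
      "FB \<gamma> 2 0 r = - complex_of_real \<gamma> / (k*k)" "FB \<gamma> 2 1 r = 0" "FB \<gamma> 2 2 r = - 1 / (k*k)"
      unfolding FB_def k_def Let_def by (simp_all add: of_real_divide)
    have b3: "b' = 0 \<or> b' = 1 \<or> b' = 2" using bs by linarith
    consider "b = 0" | "b = 1" | "b = 2" using br by linarith
    then show ?thesis
    proof cases
      case 1
      have "(\<Sum>l<3*n. W_mat \<gamma> n $$ (i,l) * Binv \<gamma> n $$ (l,j)) = k * Binv \<gamma> n $$ (n+r, j)"
        using W_rows(1)[OF br(2), of \<gamma> "\<lambda>l. Binv \<gamma> n $$ (l,j)"] br 1 unfolding k_def by simp
      also have "\<dots> = 1\<^sub>m (3*n) $$ (i,j)" unfolding B1 one using 1
        by (cases "s = r"; insert b3; elim disjE; simp add: F F[unfolded One_nat_def] kz)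
      finally show ?thesis .
    next
      case 2
      have "(\<Sum>l<3*n. W_mat \<gamma> n $$ (i,l) * Binv \<gamma> n $$ (l,j)) =
         - k * Binv \<gamma> n $$ (r, j) + complex_of_real \<gamma> * k * Binv \<gamma> n $$ (2*n+r, j)"
        using W_rows(2)[OF br(2), of \<gamma> "\<lambda>l. Binv \<gamma> n $$ (l,j)"] br 2 unfolding k_def by simp
      also have "\<dots> = 1\<^sub>m (3*n) $$ (i,j)" unfolding B0 B2 one using 2
        by (cases "s = r"; insert b3; elim disjE; simp add: F F[unfolded One_nat_def] kz field_simps)
      finally show ?thesis .
    next
      case 3
      have "(\<Sum>l<3*n. W_mat \<gamma> n $$ (i,l) * Binv \<gamma> n $$ (l,j)) =
         - complex_of_real \<gamma> * k * Binv \<gamma> n $$ (n+r, j) - k * k * Binv \<gamma> n $$ (2*n+r, j)"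
        using W_rows(3)[OF br(2), of \<gamma> "\<lambda>l. Binv \<gamma> n $$ (l,j)"] br 3 unfolding k_def by (simp add: mult_2)
      also have "\<dots> = 1\<^sub>m (3*n) $$ (i,j)" unfolding B1 B2 one using 3
        by (cases "s = r"; insert b3; elim disjE; simp add: F F[unfolded One_nat_def] kz field_simps)
      finally show ?thesis .
    qed
  qed
  finally show "(W_mat \<gamma> n * Binv \<gamma> n) $$ (i,j) = 1\<^sub>m (3*n) $$ (i,j)" .
qed (auto simp: W_mat_def Binv_def blk_def)

lemma Binv_carrier: "Binv \<gamma> n \<in> carrier_mat (3*n) (3*n)"
  unfolding Binv_def by (rule blk_carrier)

lemma Binv_W: "Binv \<gamma> n * W_mat \<gamma> n = 1\<^sub>m (3*n)"
  by (rule mat_mult_left_right_inverse[OF W_carrier Binv_carrier W_Binv])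

lemma mat_inverse_W: "the (mat_inverse (W_mat \<gamma> n)) = Binv \<gamma> n"
proof (cases "mat_inverse (W_mat \<gamma> n)")
  case None
  from mat_inverse(1)[OF W_carrier None, of UNIV]
  have "W_mat \<gamma> n \<notin> Units (ring_mat TYPE(complex) (3*n) UNIV)" .
  moreover have "W_mat \<gamma> n \<in> Units (ring_mat TYPE(complex) (3*n) UNIV)"
    unfolding Units_def ring_mat_def
    by (auto intro!: bexI[of _ "Binv \<gamma> n"] simp: W_Binv Binv_W Binv_carrier W_carrier)
  ultimately show ?thesis by blast
next
  case (Some B)
  from mat_inverse(2)[OF W_carrier Some]
  have WB: "W_mat \<gamma> n * B = 1\<^sub>m (3*n)" and BW: "B * W_mat \<gamma> n = 1\<^sub>m (3*n)"
    and B: "B \<in> carrier_mat (3*n) (3*n)" by auto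
  have "B = B * (W_mat \<gamma> n * Binv \<gamma> n)" using W_Binv B by simp
  also have "\<dots> = (B * W_mat \<gamma> n) * Binv \<gamma> n"
    by (rule assoc_mult_mat[OF B W_carrier Binv_carrier, symmetric])
  also have "\<dots> = Binv \<gamma> n" unfolding BW by (rule left_mult_one_mat[OF Binv_carrier])
  finally show ?thesis using Some by simp
qed


lemma div_le_self1: "0 \<le> (x::real) \<Longrightarrow> 1 \<le> y \<Longrightarrow> x / y \<le> x"
  using divide_left_mono[of 1 y x] by simp

lemma abs_if_bound: "\<bar>a\<bar> \<le> C \<Longrightarrow> \<bar>b\<bar> \<le> (C::real) \<Longrightarrow> \<bar>if P then a else b\<bar> \<le> C"
  by simp

lemma FB_bound:
  assumes g: "\<gamma> > 0"
  shows "cmod (FB \<gamma> b b' r) \<le> \<gamma>*\<gamma> + \<gamma> + 1"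
proof -
  define d where "d = real (r+1)"
  have d1: "d \<ge> 1" unfolding d_def by simp
  have dd: "d*d \<ge> 1" using d1 by (metis mult_mono' mult_1 zero_le_one)
  have h1: "\<gamma>*\<gamma>/(d*d) \<le> \<gamma>*\<gamma>" using dd g by (intro div_le_self1) auto
  have h2: "1/d \<le> 1" using d1 by simp
  have h3: "\<gamma>/(d*d) \<le> \<gamma>" using dd g by (intro div_le_self1) auto
  have h4: "1/(d*d) \<le> 1" using dd by simp
  have p: "0 \<le> \<gamma>*\<gamma>/(d*d)" "0 \<le> 1/d" "0 \<le> \<gamma>/(d*d)" "0 \<le> 1/(d*d)" using g d1 by auto
  have gg: "0 \<le> \<gamma>*\<gamma>" by simp
  have C_ge: "\<gamma>*\<gamma>/(d*d) \<le> \<gamma>*\<gamma> + \<gamma> + 1" "1/d \<le> \<gamma>*\<gamma> + \<gamma> + 1" "\<gamma>/(d*d) \<le> \<gamma>*\<gamma> + \<gamma> + 1"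
    "1/(d*d) \<le> \<gamma>*\<gamma> + \<gamma> + 1" "0 \<le> \<gamma>*\<gamma> + \<gamma> + 1" using h1 h2 h3 h4 gg g by linarith+
  show ?thesis unfolding FB_def Let_def norm_of_real d_def[symmetric]
    by (intro abs_if_bound; unfold abs_le_iff minus_divide_left; use p C_ge in linarith)
qed

lemma sum3_regroup: "(\<Sum>i<3*(n::nat). f i) = (\<Sum>r<n. f r + f (n+r) + f (2*n+r))"
  unfolding sum_split3 by (simp add: sum.distrib)

lemma Binv_mult_vec:
  assumes b: "b < 3" and r: "r < n" and v: "v \<in> carrier_vec (3*n)"
  shows "(Binv \<gamma> n *\<^sub>v v) $ (b*n+r) = FB \<gamma> b 0 r * v$r + FB \<gamma> b 1 r * v$(n+r) + FB \<gamma> b 2 r * v$(2*n+r)"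
proof -
  have "(Binv \<gamma> n *\<^sub>v v) $ (b*n+r) = (\<Sum>l<3*n. blk n (FB \<gamma>) $$ (b*n+r, l) * v $ l)"
    using idx_lt[OF b r] Binv_carrier[of \<gamma> n] v
    by (simp add: Binv_def scalar_prod_def lessThan_atLeast0)
  also have "\<dots> = FB \<gamma> b 0 r * v$r + FB \<gamma> b 1 r * v$(n+r) + FB \<gamma> b 2 r * v$(2*n+r)"
    by (rule blk_row[OF b r])
  finally show ?thesis .
qed

lemma sq3: "((p::real) + q + s)^2 \<le> 3*(p^2+q^2+s^2)"
proof -
  have "0 \<le> (p-q)^2 + (q-s)^2 + (p-s)^2" by simp
  then show ?thesis by (simp add: power2_eq_square algebra_simps)
qed

lemma row_bound:
  fixes F0 F1 F2 x y z :: complex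
  assumes "cmod F0 \<le> C" "cmod F1 \<le> C" "cmod F2 \<le> C"
  shows "(cmod (F0*x + F1*y + F2*z))^2 \<le> 3*C^2*((cmod x)^2 + (cmod y)^2 + (cmod z)^2)"
proof -
  have C0: "C \<ge> 0" using assms(1) norm_ge_zero order_trans by blast
  have "cmod (F0*x + F1*y + F2*z) \<le> C * cmod x + C * cmod y + C * cmod z"
  proof -
    have "cmod (F0*x + F1*y + F2*z) \<le> cmod F0 * cmod x + cmod F1 * cmod y + cmod F2 * cmod z"
    proof -
      have "cmod (F0*x + F1*y + F2*z) \<le> cmod (F0*x + F1*y) + cmod (F2*z)" by (rule norm_triangle_ineq)
      also have "\<dots> \<le> cmod (F0*x) + cmod (F1*y) + cmod (F2*z)" using norm_triangle_ineq[of "F0*x" "F1*y"] by simp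
      finally show ?thesis by (simp add: norm_mult)
    qed
    also have "\<dots> \<le> C * cmod x + C * cmod y + C * cmod z"
      using assms by (intro add_mono mult_right_mono) auto
    finally show ?thesis .
  qed
  then have "(cmod (F0*x + F1*y + F2*z))^2 \<le> (C * cmod x + C * cmod y + C * cmod z)^2"
    by (intro power_mono) auto
  also have "\<dots> \<le> 3*((C * cmod x)^2 + (C * cmod y)^2 + (C * cmod z)^2)" by (rule sq3)
  also have "\<dots> = 3*C^2*((cmod x)^2 + (cmod y)^2 + (cmod z)^2)" by (simp add: power_mult_distrib algebra_simps)
  finally show ?thesis .
qed

lemma vec_norm_sq: "v \<in> carrier_vec N \<Longrightarrow> (vec_norm v)^2 = (\<Sum>i<N. (cmod (v $ i))^2)"
  unfolding vec_norm_def by (simp add: sum_nonneg)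

lemma Binv_norm:
  assumes g: "\<gamma> > 0" and v: "v \<in> carrier_vec (3*n)"
  shows "vec_norm (Binv \<gamma> n *\<^sub>v v) \<le> 3*(\<gamma>*\<gamma>+\<gamma>+1) * vec_norm v"
proof -
  define C where "C = \<gamma>*\<gamma>+\<gamma>+1"
  have C0: "C \<ge> 0" unfolding C_def using g by simp
  have Bv: "Binv \<gamma> n *\<^sub>v v \<in> carrier_vec (3*n)" by (rule mult_mat_vec_carrier[OF Binv_carrier v])
  have FBb: "\<And>b b' r. cmod (FB \<gamma> b b' r) \<le> C" unfolding C_def by (rule FB_bound[OF g])
  have "(vec_norm (Binv \<gamma> n *\<^sub>v v))^2 = (\<Sum>r<n. (cmod ((Binv \<gamma> n *\<^sub>v v) $ r))^2
     + (cmod ((Binv \<gamma> n *\<^sub>v v) $ (n+r)))^2 + (cmod ((Binv \<gamma> n *\<^sub>v v) $ (2*n+r)))^2)"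
    unfolding vec_norm_sq[OF Bv] sum3_regroup ..
  also have "\<dots> \<le> (\<Sum>r<n. 9*C^2*((cmod (v$r))^2 + (cmod (v$(n+r)))^2 + (cmod (v$(2*n+r)))^2))"
  proof (rule sum_mono)
    fix r assume "r \<in> {..<n}"
    then have r: "r < n" by simp
    have e0: "(Binv \<gamma> n *\<^sub>v v) $ r = FB \<gamma> 0 0 r * v$r + FB \<gamma> 0 1 r * v$(n+r) + FB \<gamma> 0 2 r * v$(2*n+r)"
      using Binv_mult_vec[of 0 r n v \<gamma>] r v by simp
    have e1: "(Binv \<gamma> n *\<^sub>v v) $ (n+r) = FB \<gamma> 1 0 r * v$r + FB \<gamma> 1 1 r * v$(n+r) + FB \<gamma> 1 2 r * v$(2*n+r)"
      using Binv_mult_vec[of 1 r n v \<gamma>] r v by simp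
    have e2: "(Binv \<gamma> n *\<^sub>v v) $ (2*n+r) = FB \<gamma> 2 0 r * v$r + FB \<gamma> 2 1 r * v$(n+r) + FB \<gamma> 2 2 r * v$(2*n+r)"
      using Binv_mult_vec[of 2 r n v \<gamma>] r v by simp
    show "(cmod ((Binv \<gamma> n *\<^sub>v v) $ r))^2 + (cmod ((Binv \<gamma> n *\<^sub>v v) $ (n+r)))^2 + (cmod ((Binv \<gamma> n *\<^sub>v v) $ (2*n+r)))^2
      \<le> 9*C^2*((cmod (v$r))^2 + (cmod (v$(n+r)))^2 + (cmod (v$(2*n+r)))^2)"
    proof -
      have "\<And>b. (cmod (FB \<gamma> b 0 r * v$r + FB \<gamma> b 1 r * v$(n+r) + FB \<gamma> b 2 r * v$(2*n+r)))^2
         \<le> 3*C^2*((cmod (v$r))^2 + (cmod (v$(n+r)))^2 + (cmod (v$(2*n+r)))^2)"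
        by (rule row_bound) (rule FBb)+
      from this[of 0] this[of 1] this[of 2] show ?thesis unfolding e0 e1 e2 by linarith
    qed
  qed
  also have "\<dots> = 9*C^2 * (\<Sum>r<n. (cmod (v$r))^2 + (cmod (v$(n+r)))^2 + (cmod (v$(2*n+r)))^2)"
    by (simp add: sum_distrib_left)
  also have "\<dots> = (3*C * vec_norm v)^2"
    unfolding power_mult_distrib vec_norm_sq[OF v] sum3_regroup by simp
  finally have "(vec_norm (Binv \<gamma> n *\<^sub>v v))^2 \<le> (3*C * vec_norm v)^2" .
  moreover have "0 \<le> 3*C * vec_norm v" using C0 unfolding vec_norm_def by (simp add: sum_nonneg)
  ultimately show ?thesis unfolding C_def[symmetric] by (rule power2_le_imp_le)
qed


definition Lf1 :: "real \<Rightarrow> real \<Rightarrow> real \<Rightarrow> real \<Rightarrow> real \<Rightarrow> real \<Rightarrow> real" where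
  "Lf1 a b k x y z = x^2 + y^2 + z^2 + (a/k)*x*y + (b/k)*y*z"

definition Dm :: "real \<Rightarrow> real \<Rightarrow> real \<Rightarrow> real \<Rightarrow> real \<Rightarrow> real \<Rightarrow> real \<Rightarrow> real" where
  "Dm g a b k x y z = (let dx = k*y; dy = -k*x + g*k*z; dz = -g*k*y - k*k*z in
     2*x*dx + 2*y*dy + 2*z*dz + (a/k)*(dx*y + x*dy) + (b/k)*(dy*z + y*dz))"

lemma Lf1_equiv:
  assumes k: "k \<ge> 1" and a: "a \<ge> 0" and b: "b \<ge> 0" and ab: "a + b \<le> 1"
  shows "(x^2+y^2+z^2)/2 \<le> Lf1 a b k x y z" "Lf1 a b k x y z \<le> 3*(x^2+y^2+z^2)/2"
proof -
  have xy: "\<bar>x*y\<bar> \<le> (x^2+y^2)/2"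
  proof -
    have "0 \<le> (\<bar>x\<bar> - \<bar>y\<bar>)^2" by simp
    then show ?thesis by (simp add: power2_eq_square algebra_simps abs_mult)
  qed
  have yz: "\<bar>y*z\<bar> \<le> (y^2+z^2)/2"
  proof -
    have "0 \<le> (\<bar>y\<bar> - \<bar>z\<bar>)^2" by simp
    then show ?thesis by (simp add: power2_eq_square algebra_simps abs_mult)
  qed
  have ak: "a/k \<le> a" "0 \<le> a/k" using a k by (auto intro: div_le_self1)
  have bk: "b/k \<le> b" "0 \<le> b/k" using b k by (auto intro: div_le_self1)
  have t1: "\<bar>(a/k)*x*y\<bar> \<le> a * ((x^2+y^2)/2)"
  proof -
    have "\<bar>(a/k)*x*y\<bar> = (a/k) * \<bar>x*y\<bar>" using ak k by (simp add: abs_mult)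
    also have "\<dots> \<le> a * ((x^2+y^2)/2)" using ak xy a by (intro mult_mono) auto
    finally show ?thesis .
  qed
  have t2: "\<bar>(b/k)*y*z\<bar> \<le> b * ((y^2+z^2)/2)"
  proof -
    have "\<bar>(b/k)*y*z\<bar> = (b/k) * \<bar>y*z\<bar>" using bk k by (simp add: abs_mult)
    also have "\<dots> \<le> b * ((y^2+z^2)/2)" using bk yz b by (intro mult_mono) auto
    finally show ?thesis .
  qed
  have s1: "a * ((x^2+y^2)/2) + b * ((y^2+z^2)/2) \<le> (x^2+y^2+z^2)/2"
  proof -
    have "a * ((x^2+y^2)/2) + b * ((y^2+z^2)/2) \<le> a * ((x^2+y^2+z^2)/2) + b * ((x^2+y^2+z^2)/2)"
      using a b by (intro add_mono mult_left_mono) auto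
    also have "\<dots> = (a+b) * ((x^2+y^2+z^2)/2)" by (simp add: distrib_right)
    also have "\<dots> \<le> 1 * ((x^2+y^2+z^2)/2)" using ab by (intro mult_right_mono) auto
    finally show ?thesis by simp
  qed
  have l1: "\<And>P R A1 B1 S::real. \<bar>P\<bar> \<le> A1 \<Longrightarrow> \<bar>R\<bar> \<le> B1 \<Longrightarrow> A1 + B1 \<le> S/2 \<Longrightarrow> S/2 \<le> S + P + R"
    by linarith
  have l2: "\<And>P R A1 B1 S::real. \<bar>P\<bar> \<le> A1 \<Longrightarrow> \<bar>R\<bar> \<le> B1 \<Longrightarrow> A1 + B1 \<le> S/2 \<Longrightarrow> S + P + R \<le> 3*S/2"
    by linarith
  show "(x^2+y^2+z^2)/2 \<le> Lf1 a b k x y z"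
    unfolding Lf1_def by (rule l1[OF t1 t2 s1])
  show "Lf1 a b k x y z \<le> 3*(x^2+y^2+z^2)/2"
    unfolding Lf1_def by (rule l2[OF t1 t2 s1])
qed

lemma Lf1_deriv:
  assumes x: "(x has_real_derivative (k * y t)) (at t)"
    and y: "(y has_real_derivative (-k * x t + g*k * z t)) (at t)"
    and z: "(z has_real_derivative (-g*k * y t - k*k * z t)) (at t)"
  shows "((\<lambda>t. Lf1 a b k (x t) (y t) (z t)) has_real_derivative Dm g a b k (x t) (y t) (z t)) (at t)"
  unfolding Lf1_def[abs_def] Dm_def Let_def
  by (rule derivative_eq_intros x y z refl | simp)+ (cases "k = 0"; simp add: field_simps)

definition bc :: "real \<Rightarrow> real" where
  "bc g = 1 / ((g + (g^2/2-1)^2/g + 1/g) + g + 2)"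
definition ac :: "real \<Rightarrow> real" where "ac g = bc g * g / 2"
definition mc :: "real \<Rightarrow> real" where "mc g = min (bc g * g / 4) 1"
definition cc :: "real \<Rightarrow> real" where "cc g = 2 * mc g / 3"

lemma cst_facts:
  assumes g: "g > 0"
  shows "bc g > 0" "bc g * (g + (g^2/2-1)^2/g + 1/g) \<le> 1" "ac g \<ge> 0" "ac g + bc g \<le> 1"
    "mc g > 0" "cc g > 0"
proof -
  define Q where "Q = g + (g^2/2-1)^2/g + 1/g"
  have Q: "Q > 0" unfolding Q_def using g by (simp add: add_pos_nonneg)
  have D: "Q + g + 2 > 0" using Q g by simp
  have b: "bc g = 1 / (Q + g + 2)" unfolding bc_def Q_def ..
  show b0: "bc g > 0" unfolding b using D by simp
  show "bc g * (g + (g^2/2-1)^2/g + 1/g) \<le> 1" unfolding Q_def[symmetric] b using D Q g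
    by (simp add: divide_le_eq)
  show "ac g \<ge> 0" unfolding ac_def using b0 g by simp
  have "ac g + bc g = bc g * (g/2 + 1)" unfolding ac_def by (simp add: algebra_simps)
  also have "\<dots> = (g/2+1) / (Q + g + 2)" unfolding b by simp
  also have "\<dots> \<le> 1" using D Q g by (simp add: divide_le_eq)
  finally show "ac g + bc g \<le> 1" .
  show m: "mc g > 0" unfolding mc_def using b0 g by simp
  show "cc g > 0" unfolding cc_def using m by simp
qed

lemma Dm_bound:
  assumes g: "g > 0" and k: "k \<ge> 1"
  shows "Dm g (ac g) (bc g) k x y z \<le> - cc g * Lf1 (ac g) (bc g) k x y z"
proof -
  note C = cst_facts[OF g]
  have "Dm g (ac g) (bc g) k x y z \<le> -(bc g*g/4)*(x^2+y^2) - z^2"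
    unfolding Dm_def Let_def ac_def
    by (rule lyap_ineq[OF g k C(1) C(2)]) simp_all
  also have "\<dots> \<le> - mc g * (x^2+y^2+z^2)"
  proof -
    have "mc g * (x^2+y^2) \<le> (bc g*g/4)*(x^2+y^2)" unfolding mc_def by (intro mult_right_mono) auto
    moreover have "mc g * z^2 \<le> 1 * z^2" unfolding mc_def by (intro mult_right_mono) auto
    ultimately show ?thesis by (simp add: algebra_simps)
  qed
  also have "\<dots> \<le> - cc g * Lf1 (ac g) (bc g) k x y z"
  proof -
    have "Lf1 (ac g) (bc g) k x y z \<le> 3*(x^2+y^2+z^2)/2" by (rule Lf1_equiv(2)[OF k]) (use C in auto)
    then have "mc g * Lf1 (ac g) (bc g) k x y z \<le> mc g * (3*(x^2+y^2+z^2)/2)"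
      using C(5) by (intro mult_left_mono) auto
    then show ?thesis unfolding cc_def by (simp add: algebra_simps)
  qed
  finally show ?thesis .
qed


context
  fixes g :: real and n :: nat and w :: "complex vec"
  assumes g: "g > 0"
begin

definition yy :: "nat \<Rightarrow> real \<Rightarrow> complex" where
  "yy i t = yv (W_mat g n) (3*n) w i t"

lemma yy_deriv:
  assumes i: "i < 3*n"
  shows "((\<lambda>t. yy i t) has_vector_derivative (\<Sum>l<3*n. W_mat g n $$ (i,l) * yy l t)) (at t)"
  unfolding yy_def by (rule yv_deriv[OF W_carrier i])

lemma idx_r: "r < n \<Longrightarrow> r < 3*n" "r < n \<Longrightarrow> n + r < 3*n" "r < n \<Longrightarrow> 2*n + r < 3*n"
  by auto

lemma comp_derivs:
  assumes r: "r < n"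
  defines "k \<equiv> real (r+1)"
  shows "((\<lambda>t. Re (yy r t)) has_real_derivative (k * Re (yy (n+r) t))) (at t)"
    "((\<lambda>t. Re (yy (n+r) t)) has_real_derivative (-k * Re (yy r t) + g*k * Re (yy (2*n+r) t))) (at t)"
    "((\<lambda>t. Re (yy (2*n+r) t)) has_real_derivative (-g*k * Re (yy (n+r) t) - k*k * Re (yy (2*n+r) t))) (at t)"
    "((\<lambda>t. Im (yy r t)) has_real_derivative (k * Im (yy (n+r) t))) (at t)"
    "((\<lambda>t. Im (yy (n+r) t)) has_real_derivative (-k * Im (yy r t) + g*k * Im (yy (2*n+r) t))) (at t)"
    "((\<lambda>t. Im (yy (2*n+r) t)) has_real_derivative (-g*k * Im (yy (n+r) t) - k*k * Im (yy (2*n+r) t))) (at t)"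
proof -
  note R = W_rows[OF r, of g "\<lambda>l. yy l t"]
  have d0: "((\<lambda>t. yy r t) has_vector_derivative (complex_of_real k * yy (n+r) t)) (at t)"
    using yy_deriv[OF idx_r(1)[OF r], of t] unfolding R k_def .
  have d1: "((\<lambda>t. yy (n+r) t) has_vector_derivative (- complex_of_real k * yy r t + complex_of_real g * complex_of_real k * yy (2*n+r) t)) (at t)"
    using yy_deriv[OF idx_r(2)[OF r], of t] unfolding R k_def .
  have d2: "((\<lambda>t. yy (2*n+r) t) has_vector_derivative (- complex_of_real g * complex_of_real k * yy (n+r) t - complex_of_real k * complex_of_real k * yy (2*n+r) t)) (at t)"
    using yy_deriv[OF idx_r(3)[OF r], of t] unfolding R k_def .
  show "((\<lambda>t. Re (yy r t)) has_real_derivative (k * Re (yy (n+r) t))) (at t)"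
    using has_field_derivative_Re[OF d0] by simp
  show "((\<lambda>t. Re (yy (n+r) t)) has_real_derivative (-k * Re (yy r t) + g*k * Re (yy (2*n+r) t))) (at t)"
    using has_field_derivative_Re[OF d1] by simp
  show "((\<lambda>t. Re (yy (2*n+r) t)) has_real_derivative (-g*k * Re (yy (n+r) t) - k*k * Re (yy (2*n+r) t))) (at t)"
    using has_field_derivative_Re[OF d2] by simp
  show "((\<lambda>t. Im (yy r t)) has_real_derivative (k * Im (yy (n+r) t))) (at t)"
    using has_field_derivative_Im[OF d0] by simp
  show "((\<lambda>t. Im (yy (n+r) t)) has_real_derivative (-k * Im (yy r t) + g*k * Im (yy (2*n+r) t))) (at t)"
    using has_field_derivative_Im[OF d1] by simp
  show "((\<lambda>t. Im (yy (2*n+r) t)) has_real_derivative (-g*k * Im (yy (n+r) t) - k*k * Im (yy (2*n+r) t))) (at t)"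
    using has_field_derivative_Im[OF d2] by simp
qed

definition Lm :: "nat \<Rightarrow> real \<Rightarrow> real" where
  "Lm r t = Lf1 (ac g) (bc g) (real (r+1)) (Re (yy r t)) (Re (yy (n+r) t)) (Re (yy (2*n+r) t))
          + Lf1 (ac g) (bc g) (real (r+1)) (Im (yy r t)) (Im (yy (n+r) t)) (Im (yy (2*n+r) t))"

definition Dmr :: "nat \<Rightarrow> real \<Rightarrow> real" where
  "Dmr r t = Dm g (ac g) (bc g) (real (r+1)) (Re (yy r t)) (Re (yy (n+r) t)) (Re (yy (2*n+r) t))
          + Dm g (ac g) (bc g) (real (r+1)) (Im (yy r t)) (Im (yy (n+r) t)) (Im (yy (2*n+r) t))"

definition LL :: "real \<Rightarrow> real" where "LL t = (\<Sum>r<n. Lm r t)"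
definition EE :: "real \<Rightarrow> real" where "EE t = (\<Sum>i<3*n. (cmod (yy i t))^2)"

lemma Lm_deriv: "r < n \<Longrightarrow> ((\<lambda>t. Lm r t) has_real_derivative Dmr r t) (at t)"
  unfolding Lm_def Dmr_def
  by (intro DERIV_add Lf1_deriv comp_derivs) auto

lemma LL_deriv: "(LL has_real_derivative (\<Sum>r<n. Dmr r t)) (at t)"
  unfolding LL_def[abs_def] by (rule DERIV_sum) (use Lm_deriv in auto)

lemma Dmr_bound: "(\<Sum>r<n. Dmr r t) \<le> - cc g * LL t"
proof -
  have "(\<Sum>r<n. Dmr r t) \<le> (\<Sum>r<n. - cc g * Lm r t)"
  proof (rule sum_mono)
    fix r assume "r \<in> {..<n}"
    have k: "real (r+1) \<ge> 1" by simp
    show "Dmr r t \<le> - cc g * Lm r t"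
      unfolding Dmr_def Lm_def distrib_left
      using Dm_bound[OF g k] by (intro add_mono) auto
  qed
  also have "\<dots> = - cc g * LL t" unfolding LL_def by (simp add: sum_distrib_left)
  finally show ?thesis .
qed

lemma EE_regroup: "EE t = (\<Sum>r<n. ((Re (yy r t))^2 + (Re (yy (n+r) t))^2 + (Re (yy (2*n+r) t))^2)
    + ((Im (yy r t))^2 + (Im (yy (n+r) t))^2 + (Im (yy (2*n+r) t))^2))"
  unfolding EE_def sum3_regroup cmod_power2 by (rule sum.cong) auto

lemma EE_LL: "EE t / 2 \<le> LL t" "LL t \<le> 3 * EE t / 2"
proof -
  note C = cst_facts[OF g]
  have k: "\<And>r. real (r+1) \<ge> 1" by simp
  note E1 = Lf1_equiv[OF k C(3) less_imp_le[OF C(1)] C(4)]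
  have "EE t / 2 = (\<Sum>r<n. ((Re (yy r t))^2 + (Re (yy (n+r) t))^2 + (Re (yy (2*n+r) t))^2)/2
    + ((Im (yy r t))^2 + (Im (yy (n+r) t))^2 + (Im (yy (2*n+r) t))^2)/2)"
    unfolding EE_regroup sum_divide_distrib by (simp add: add_divide_distrib)
  also have "\<dots> \<le> LL t" unfolding LL_def Lm_def by (intro sum_mono add_mono E1(1))
  finally show "EE t / 2 \<le> LL t" .
  have "LL t \<le> (\<Sum>r<n. 3*((Re (yy r t))^2 + (Re (yy (n+r) t))^2 + (Re (yy (2*n+r) t))^2)/2
    + 3*((Im (yy r t))^2 + (Im (yy (n+r) t))^2 + (Im (yy (2*n+r) t))^2)/2)"
    unfolding LL_def Lm_def by (intro sum_mono add_mono E1(2))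
  also have "\<dots> = 3 * EE t / 2"
    unfolding EE_regroup sum_divide_distrib sum_distrib_left by (simp add: add_divide_distrib distrib_left)
  finally show "LL t \<le> 3 * EE t / 2" .
qed

lemma decay:
  assumes t: "t \<ge> 0"
  shows "EE t \<le> 3 * exp (- cc g * t) * EE 0"
proof -
  define c where "c = cc g"
  define Phi where "Phi s = exp (c * s) * LL s" for s
  have "Phi t \<le> Phi 0"
  proof (rule DERIV_nonpos_imp_nonincreasing[OF t])
    fix x :: real
    have d: "(Phi has_real_derivative (exp (c*x) * c * LL x + exp (c*x) * (\<Sum>r<n. Dmr r x))) (at x)"
      unfolding Phi_def[abs_def]
      by (rule derivative_eq_intros LL_deriv refl | simp)+
    have "exp (c*x) * c * LL x + exp (c*x) * (\<Sum>r<n. Dmr r x) = exp (c*x) * (c * LL x + (\<Sum>r<n. Dmr r x))"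
      by (simp add: algebra_simps)
    also have "\<dots> \<le> 0"
      using Dmr_bound[of x] unfolding c_def by (intro mult_nonneg_nonpos) auto
    finally show "\<exists>y. (Phi has_real_derivative y) (at x) \<and> y \<le> 0" using d by blast
  qed
  then have "exp (c * t) * LL t \<le> LL 0" unfolding Phi_def by simp
  then have "LL t \<le> exp (- c * t) * LL 0"
    by (simp add: exp_minus field_simps)
  moreover have "EE t \<le> 2 * LL t" using EE_LL(1)[of t] by simp
  moreover have "exp (- c * t) * LL 0 \<le> exp (- c * t) * (3 * EE 0 / 2)"
    using EE_LL(2)[of 0] by (intro mult_left_mono) auto
  ultimately have "EE t \<le> 2 * (exp (- c * t) * (3 * EE 0 / 2))" by linarith
  then show ?thesis unfolding c_def by (simp add: mult_ac)
qed

end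


lemma T_carrier: "T_sg g n t \<in> carrier_mat (3*n) (3*n)"
  unfolding T_sg_def by (rule mat_exp_carrier[OF W_carrier])

lemma T_norm:
  assumes g: "g > 0" and w: "w \<in> carrier_vec (3*n)" and t: "t \<ge> 0"
  shows "vec_norm (T_sg g n t *\<^sub>v w) \<le> sqrt 3 * exp (- cc g * t / 2) * vec_norm w"
proof -
  have Tw: "T_sg g n t *\<^sub>v w \<in> carrier_vec (3*n)" by (rule mult_mat_vec_carrier[OF T_carrier w])
  have "(vec_norm (T_sg g n t *\<^sub>v w))^2 = EE g n w t"
    unfolding vec_norm_sq[OF Tw] EE_def[OF g] yy_def[OF g]
    by (rule sum.cong) (use yv_exp[OF W_carrier w] in \<open>auto simp: T_sg_def\<close>)
  also have "\<dots> \<le> 3 * exp (- cc g * t) * EE g n w 0" by (rule decay[OF g t])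
  also have "EE g n w 0 = (vec_norm w)^2"
    unfolding vec_norm_sq[OF w] EE_def[OF g] yy_def[OF g]
    by (rule sum.cong) (use yv_zero[OF W_carrier] in auto)
  also have "3 * exp (- cc g * t) * (vec_norm w)^2 = (sqrt 3 * exp (- cc g * t / 2) * vec_norm w)^2"
    by (simp add: power_mult_distrib exp_double[symmetric] power2_eq_square[of "exp _"] exp_add[symmetric])
  finally have "(vec_norm (T_sg g n t *\<^sub>v w))^2 \<le> (sqrt 3 * exp (- cc g * t / 2) * vec_norm w)^2" .
  moreover have "0 \<le> sqrt 3 * exp (- cc g * t / 2) * vec_norm w" unfolding vec_norm_def by (simp add: sum_nonneg)
  ultimately show ?thesis by (rule power2_le_imp_le)
qed

lemma sqrt_le_exp: "s \<ge> 0 \<Longrightarrow> sqrt s \<le> exp s"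
proof -
  assume s: "s \<ge> 0"
  have "sqrt s \<le> 1 + s"
  proof (cases "s \<le> 1")
    case True then have "sqrt s \<le> 1" by simp
    then show ?thesis using s by linarith
  next
    case False then have "sqrt s \<le> s" using real_sqrt_le_iff[of s "s^2"] by (simp add: power2_eq_square)
    then show ?thesis by simp
  qed
  also have "\<dots> \<le> exp s" by (rule exp_ge_add_one_self)
  finally show ?thesis by (simp add: add.commute)
qed

lemma exp_decay_bound:
  assumes c: "c > 0" and t: "t > 0"
  shows "exp (- c * t / 2) \<le> sqrt (2/c) / sqrt t"
proof -
  define s where "s = c * t / 2"
  have s0: "s > 0" unfolding s_def using c t by simp
  have "exp (- c * t / 2) = 1 / exp s" unfolding s_def by (simp add: exp_minus field_simps)
  also have "\<dots> \<le> 1 / sqrt s" using sqrt_le_exp[of s] s0 by (intro divide_left_mono) auto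
  also have "1 / sqrt s = sqrt (2/c) / sqrt t"
  proof -
    have "sqrt s = sqrt (c/2) * sqrt t" unfolding s_def by (simp add: real_sqrt_mult[symmetric] mult_ac)
    moreover have "sqrt (2/c) = 1 / sqrt (c/2)" by (simp add: real_sqrt_divide)
    ultimately show ?thesis by simp
  qed
  finally show ?thesis .
qed

lemma main_bound:
  assumes g: "g > 0" and t: "t > 0" and v: "v \<in> carrier_vec (3*n)" and v1: "vec_norm v \<le> 1"
  shows "vec_norm ((T_sg g n t * Binv g n) *\<^sub>v v) \<le> (sqrt 3 * (3*(g*g+g+1)) * sqrt (2 / cc g)) / sqrt t"
proof -
  define C where "C = 3*(g*g+g+1)"
  have C0: "C \<ge> 0" unfolding C_def using g by simp
  have c: "cc g > 0" using cst_facts(6)[OF g] .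
  have Bv: "Binv g n *\<^sub>v v \<in> carrier_vec (3*n)" by (rule mult_mat_vec_carrier[OF Binv_carrier v])
  have "(T_sg g n t * Binv g n) *\<^sub>v v = T_sg g n t *\<^sub>v (Binv g n *\<^sub>v v)"
    by (rule assoc_mult_mat_vec[OF T_carrier Binv_carrier v])
  then have "vec_norm ((T_sg g n t * Binv g n) *\<^sub>v v) \<le> sqrt 3 * exp (- cc g * t / 2) * vec_norm (Binv g n *\<^sub>v v)"
    using T_norm[OF g Bv, of t] t by simp
  also have "\<dots> \<le> sqrt 3 * exp (- cc g * t / 2) * (C * vec_norm v)"
    using Binv_norm[OF g v] unfolding C_def by (intro mult_left_mono) auto
  also have "\<dots> \<le> sqrt 3 * exp (- cc g * t / 2) * C"
    using mult_left_mono[OF v1 C0] by (intro mult_left_mono) auto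
  also have "\<dots> \<le> sqrt 3 * (sqrt (2 / cc g) / sqrt t) * C"
    using exp_decay_bound[OF c t] C0 by (intro mult_right_mono mult_left_mono) auto
  also have "\<dots> = (sqrt 3 * C * sqrt (2 / cc g)) / sqrt t" by simp
  finally show ?thesis unfolding C_def .
qed

theorem theorem4p8:
  fixes \<gamma> :: real
  assumes "\<gamma> > 0"
  shows "\<exists>M>0. \<forall>n\<ge>1. \<forall>t>0.
           op_norm (T_sg \<gamma> n t * the (mat_inverse (W_mat \<gamma> n))) \<le> M / sqrt t"
proof -
  have g: "\<gamma> > 0" by fact
  define M where "M = sqrt 3 * (3*(\<gamma>*\<gamma>+\<gamma>+1)) * sqrt (2 / cc \<gamma>)"
  have c: "cc \<gamma> > 0" using cst_facts(6)[OF g] .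
  have C: "3*(\<gamma>*\<gamma>+\<gamma>+1) > 0" using g by (simp add: add_pos_pos)
  have Mpos: "M > 0" unfolding M_def using C c by simp
  have main: "op_norm (T_sg \<gamma> n t * the (mat_inverse (W_mat \<gamma> n))) \<le> M / sqrt t"
    if t: "t > 0" for n :: nat and t :: real
  proof -
    let ?A = "T_sg \<gamma> n t * Binv \<gamma> n"
    let ?S = "{vec_norm (?A *\<^sub>v v) |v. v \<in> carrier_vec (3*n) \<and> vec_norm v \<le> 1}"
    have dc: "dim_col ?A = 3*n" using carrier_matD(2)[OF Binv_carrier[of \<gamma> n]] by simp
    have z: "vec_norm (0\<^sub>v (3*n) :: complex vec) \<le> 1" unfolding vec_norm_def by simp
    have ne: "?S \<noteq> {}"
    proof -
      have "vec_norm (?A *\<^sub>v 0\<^sub>v (3*n)) \<in> ?S"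
        by (rule CollectI, rule exI[of _ "0\<^sub>v (3*n)"]) (use z in simp)
      then show ?thesis by (metis empty_iff)
    qed
    have ub: "x \<le> M / sqrt t" if x: "x \<in> ?S" for x
    proof -
      from x obtain v where v: "v \<in> carrier_vec (3*n)" "vec_norm v \<le> 1" and xv: "x = vec_norm (?A *\<^sub>v v)"
        by (auto simp only: mem_Collect_eq)
      show ?thesis unfolding xv M_def by (rule main_bound[OF g t v])
    qed
    have "op_norm ?A \<le> M / sqrt t"
      unfolding op_norm_def dc by (rule cSup_least[OF ne ub])
    then show ?thesis unfolding mat_inverse_W .
  qed
  show ?thesis using Mpos main by blast
qed


end
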